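(* Let $n\ge 4$ and let $G$ be a graph on vertex set $[n]$ with $e(G)>\binom{n-1}{2}+1$ or $\rho(G)>n-2$. For $2\le j\le\lceil n/2\rceil$ let $e_j=\{j,n+2-j\}$, and for $1\le k\le\lfloor n/2\rfloor$ let $e'_k=\{k,n+1-k\}$. Then (i) $\{e_3,\ldots,e_{\lceil n/2\rceil}\}\subseteq E(\mathcal{K}(G))$, and (ii) $\{e'_1,\ldots,e'_{\lfloor n/2\rfloor}\}\subseteq E(\mathcal{K}(G))$.
   Context: $e(G)$ is the number of edges and $\rho(G)$ the adjacency spectral radius of $G$. Kelmans transformation: for vertices $x,y$, $\mathcal{K}_{xy}(G)$ is obtained from $G$ by deleting all edges between $y$ and $N_G(y)\setminus(N_G(x)\cup\{x\})$ and adding all edges between $x$ and $N_G(y)\setminus(N_G(x)\cup\{x\})$. For $G$ on $[n]$, $\mathcal{K}(G)$ denotes the graph obtained by repeatedly applying $\mathcal{K}_{xy}$ for pairs $x<y$ until the graph is invariant under all $\mathcal{K}_{xy}$ with $x<y$ (the result is independent of the order of transformations). *)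

theory Defs
  imports Main "Jordan_Normal_Form.Spectral_Radius"
begin

definition is_graph_on :: "nat \<Rightarrow> nat set set \<Rightarrow> bool" where
  "is_graph_on n E \<longleftrightarrow> (\<forall>e\<in>E. e \<subseteq> {1..n} \<and> card e = 2)"

definition nbhd :: "nat set set \<Rightarrow> nat \<Rightarrow> nat set" where
  "nbhd E v = {u. {u, v} \<in> E}"

definition kelmans :: "nat \<Rightarrow> nat \<Rightarrow> nat set set \<Rightarrow> nat set set" where
  "kelmans x y E =
     (let D = nbhd E y - (nbhd E x \<union> {x})
      in (E - {{y, z} | z. z \<in> D}) \<union> {{x, z} | z. z \<in> D})"

definition kelmans_step :: "nat \<Rightarrow> nat set set \<Rightarrow> nat set set \<Rightarrow> bool" where
  "kelmans_step n E E' \<longleftrightarrow> (\<exists>x y. 1 \<le> x \<and> x < y \<and> y \<le> n \<and> E' = kelmans x y E)"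

definition kelmans_stable :: "nat \<Rightarrow> nat set set \<Rightarrow> bool" where
  "kelmans_stable n E \<longleftrightarrow> (\<forall>x y. 1 \<le> x \<and> x < y \<and> y \<le> n \<longrightarrow> kelmans x y E = E)"

text \<open>Adjacency matrix (index i corresponds to vertex i+1), over the complex numbers
  so that the library spectral radius applies.\<close>
definition adj_mat :: "nat \<Rightarrow> nat set set \<Rightarrow> complex mat" where
  "adj_mat n E = mat n n (\<lambda>(i, j). if {i + 1, j + 1} \<in> E then 1 else 0)"

definition rho :: "nat \<Rightarrow> nat set set \<Rightarrow> real" where
  "rho n E = spectral_radius (adj_mat n E)"

end

theory Submission
  imports Defs
begin


definition Q :: "nat \<Rightarrow> nat set set \<Rightarrow> (nat \<Rightarrow> real) \<Rightarrow> real" where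
  "Q n E u = (\<Sum>i\<in>{1..n}. \<Sum>j\<in>{1..n}. if {i,j} \<in> E then u i * u j else 0)"

definition N2 :: "nat \<Rightarrow> (nat \<Rightarrow> real) \<Rightarrow> real" where
  "N2 n u = (\<Sum>i\<in>{1..n}. (u i)^2)"

definition P :: "nat set set \<Rightarrow> (nat \<Rightarrow> real) \<Rightarrow> real" where
  "P E u = (\<Sum>e\<in>E. prod u e)"

lemma graph_finite: "is_graph_on n E \<Longrightarrow> finite E"
  unfolding is_graph_on_def
  by (rule finite_subset[of _ "Pow {1..n}"]) auto

lemma graph_edge: assumes "is_graph_on n E" "e \<in> E"
  obtains a b where "e = {a,b}" "a \<noteq> b" "a \<in> {1..n}" "b \<in> {1..n}"
proof -
  have c: "card e = 2" "e \<subseteq> {1..n}" using assms unfolding is_graph_on_def by auto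
  from c(1) obtain a b where ab: "e = {a,b}" "a \<noteq> b" unfolding card_2_iff by blast
  show ?thesis using that[OF ab] ab c(2) by auto
qed

lemma graph_edge2: assumes "is_graph_on n E" "{a,b} \<in> E"
  shows "a \<noteq> b" "a \<in> {1..n}" "b \<in> {1..n}"
proof -
  have c: "card {a,b} = 2" "{a,b} \<subseteq> {1..n}" using assms unfolding is_graph_on_def by auto
  show "a \<noteq> b" using c(1) by (cases "a = b") auto
  show "a \<in> {1..n}" "b \<in> {1..n}" using c(2) by auto
qed

lemma graph_nosing: assumes "is_graph_on n E" shows "{a} \<notin> E"
proof
  assume "{a} \<in> E"
  then have "{a,a} \<in> E" by simp
  from graph_edge2(1)[OF assms this] show False by simp
qed

lemma Q_P: assumes G: "is_graph_on n E"
  shows "Q n E u = 2 * P E u"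
proof -
  let ?S = "{p \<in> {1..n} \<times> {1..n}. {fst p, snd p} \<in> E}"
  let ?h = "\<lambda>p. u (fst p) * u (snd p)"
  have fin: "finite E" using graph_finite[OF G] .
  have "Q n E u = (\<Sum>p\<in>{1..n} \<times> {1..n}. if {fst p, snd p} \<in> E then ?h p else 0)"
    unfolding Q_def sum.cartesian_product by (simp add: case_prod_beta)
  also have "\<dots> = sum ?h ?S"
    by (simp add: sum.inter_filter)
  also have "\<dots> = (\<Sum>e\<in>E. sum ?h {p. p \<in> ?S \<and> {fst p, snd p} = e})"
    by (rule sum.group[symmetric]) (use fin in auto)
  also have "\<dots> = (\<Sum>e\<in>E. 2 * prod u e)"
  proof (rule sum.cong[OF refl])
    fix e assume e: "e \<in> E"
    then obtain a b where ab: "e = {a,b}" "a \<noteq> b" "a \<in> {1..n}" "b \<in> {1..n}"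
      using graph_edge[OF G] by blast
    have "{p. p \<in> ?S \<and> {fst p, snd p} = e} = {(a,b),(b,a)}"
    proof (rule Set.set_eqI, rule iffI)
      fix p assume "p \<in> {p. p \<in> ?S \<and> {fst p, snd p} = e}"
      then have "{fst p, snd p} = {a,b}" using ab by auto
      then have "p = (a,b) \<or> p = (b,a)" unfolding doubleton_eq_iff by (cases p) auto
      then show "p \<in> {(a,b),(b,a)}" by blast
    next
      fix p assume "p \<in> {(a,b),(b,a)}"
      moreover have "{b,a} \<in> E" using e ab by (simp add: insert_commute)
      ultimately show "p \<in> {p. p \<in> ?S \<and> {fst p, snd p} = e}" using ab e by (auto simp: insert_commute)
    qed
    then show "sum ?h {p. p \<in> ?S \<and> {fst p, snd p} = e} = 2 * prod u e"
      using ab by simp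
  qed
  finally show ?thesis unfolding P_def by (simp add: sum_distrib_left)
qed



definition KD :: "nat \<Rightarrow> nat \<Rightarrow> nat set set \<Rightarrow> nat set" where
  "KD x y E = nbhd E y - (nbhd E x \<union> {x})"

lemma kelmans_alt: "kelmans x y E = (E - (\<lambda>z. {y,z}) ` KD x y E) \<union> (\<lambda>z. {x,z}) ` KD x y E"
  unfolding kelmans_def KD_def Let_def setcompr_eq_image Collect_mem_eq ..

lemma img2: "{a,b} \<in> (\<lambda>z. {c,z}) ` D \<longleftrightarrow> (a = c \<and> b \<in> D) \<or> (b = c \<and> a \<in> D)"
proof
  assume "{a,b} \<in> (\<lambda>z. {c,z}) ` D"
  then obtain z where "z \<in> D" "{a,b} = {c,z}" by blast
  then show "(a = c \<and> b \<in> D) \<or> (b = c \<and> a \<in> D)" unfolding doubleton_eq_iff by blast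
next
  assume "(a = c \<and> b \<in> D) \<or> (b = c \<and> a \<in> D)"
  then show "{a,b} \<in> (\<lambda>z. {c,z}) ` D" by (auto simp: insert_commute)
qed

lemma memK: "{a,b} \<in> kelmans x y E \<longleftrightarrow>
   ({a,b} \<in> E \<and> \<not> ((a = y \<and> b \<in> KD x y E) \<or> (b = y \<and> a \<in> KD x y E)))
   \<or> (a = x \<and> b \<in> KD x y E) \<or> (b = x \<and> a \<in> KD x y E)"
  unfolding kelmans_alt Un_iff Diff_iff img2 by blast

lemma KD_mem: "z \<in> KD x y E \<longleftrightarrow> {z,y} \<in> E \<and> {z,x} \<notin> E \<and> z \<noteq> x"
  unfolding KD_def nbhd_def by auto

lemma kel_graph: assumes G: "is_graph_on n E" and x: "x \<in> {1..n}"
  shows "is_graph_on n (kelmans x y E)"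
  unfolding is_graph_on_def kelmans_alt
proof
  fix e assume "e \<in> E - (\<lambda>z. {y,z}) ` KD x y E \<union> (\<lambda>z. {x,z}) ` KD x y E"
  then consider "e \<in> E" | z where "z \<in> KD x y E" "e = {x,z}" by blast
  then show "e \<subseteq> {1..n} \<and> card e = 2"
  proof cases
    case 1 then show ?thesis using G unfolding is_graph_on_def by blast
  next
    case 2
    then have "{z,y} \<in> E" "z \<noteq> x" using KD_mem by auto
    then have "z \<in> {1..n}" using graph_edge2[OF G] by blast
    then show ?thesis using 2 x \<open>z \<noteq> x\<close> by auto
  qed
qed

lemma kel_parts: assumes G: "is_graph_on n E"
  shows "(\<lambda>z. {y,z}) ` KD x y E \<subseteq> E" "(\<lambda>z. {x,z}) ` KD x y E \<inter> E = {}"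
    "inj_on (\<lambda>z. {y,z}) (KD x y E)" "inj_on (\<lambda>z. {x,z}) (KD x y E)"
    "y \<notin> KD x y E" "x \<notin> KD x y E" "finite (KD x y E)"
proof -
  show "(\<lambda>z. {y,z}) ` KD x y E \<subseteq> E"
  proof
    fix e assume "e \<in> (\<lambda>z. {y,z}) ` KD x y E"
    then obtain z where z: "z \<in> KD x y E" "e = {y,z}" by blast
    then have "{z,y} \<in> E" unfolding KD_mem by blast
    then show "e \<in> E" using z(2) insert_commute[of y z "{}"] by simp
  qed
  show "(\<lambda>z. {x,z}) ` KD x y E \<inter> E = {}"
  proof (rule ccontr)
    assume "(\<lambda>z. {x,z}) ` KD x y E \<inter> E \<noteq> {}"
    then obtain z where z: "z \<in> KD x y E" "{x,z} \<in> E" by blast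
    then have "{z,x} \<notin> E" unfolding KD_mem by blast
    then show False using z(2) insert_commute[of x z "{}"] by simp
  qed
  show "inj_on (\<lambda>z. {y,z}) (KD x y E)" unfolding inj_on_def doubleton_eq_iff by blast
  show "inj_on (\<lambda>z. {x,z}) (KD x y E)" unfolding inj_on_def doubleton_eq_iff by blast
  show "y \<notin> KD x y E" using graph_nosing[OF G, of y] unfolding KD_mem by simp
  show "x \<notin> KD x y E" unfolding KD_mem by simp
  have "KD x y E \<subseteq> {1..n}"
  proof
    fix z assume "z \<in> KD x y E"
    then have "{z,y} \<in> E" unfolding KD_mem by blast
    then show "z \<in> {1..n}" using graph_edge2[OF G] by blast
  qed
  then show "finite (KD x y E)" using finite_subset by blast
qed

lemma kel_card: assumes G: "is_graph_on n E"
  shows "card (kelmans x y E) = card E"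
proof -
  note p = kel_parts[OF G, where x=x and y=y]
  have fE: "finite E" using graph_finite[OF G] .
  have "card (kelmans x y E) = card (E - (\<lambda>z. {y,z}) ` KD x y E) + card ((\<lambda>z. {x,z}) ` KD x y E)"
    unfolding kelmans_alt by (rule card_Un_disjoint) (use fE p in auto)
  also have "\<dots> = card E - card (KD x y E) + card (KD x y E)"
    using p fE by (simp add: card_Diff_subset card_image finite_subset)
  also have "\<dots> = card E"
  proof -
    have "card ((\<lambda>z. {y,z}) ` KD x y E) \<le> card E" using p fE by (intro card_mono) auto
    then show ?thesis using p by (simp add: card_image)
  qed
  finally show ?thesis .
qed

lemma prod2: "a \<noteq> b \<Longrightarrow> prod u {a,b} = u a * u b" by simp

lemma kel_P: assumes G: "is_graph_on n E"
  shows "P (kelmans x y E) u = P E u - (\<Sum>z\<in>KD x y E. u y * u z) + (\<Sum>z\<in>KD x y E. u x * u z)"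
proof -
  note p = kel_parts[OF G, where x=x and y=y]
  have fE: "finite E" using graph_finite[OF G] .
  have nxy: "\<And>z. z \<in> KD x y E \<Longrightarrow> y \<noteq> z" "\<And>z. z \<in> KD x y E \<Longrightarrow> x \<noteq> z" using p by blast+
  have "P (kelmans x y E) u = P (E - (\<lambda>z. {y,z}) ` KD x y E) u + P ((\<lambda>z. {x,z}) ` KD x y E) u"
    unfolding kelmans_alt P_def by (rule sum.union_disjoint) (use fE p in auto)
  also have "P (E - (\<lambda>z. {y,z}) ` KD x y E) u = P E u - P ((\<lambda>z. {y,z}) ` KD x y E) u"
    unfolding P_def by (rule sum_diff) (use fE p in auto)
  also have "P ((\<lambda>z. {y,z}) ` KD x y E) u = (\<Sum>z\<in>KD x y E. u y * u z)"
    unfolding P_def using p by (subst sum.reindex) (simp_all, rule sum.cong, simp_all add: prod2 nxy)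
  also have "P ((\<lambda>z. {x,z}) ` KD x y E) u = (\<Sum>z\<in>KD x y E. u x * u z)"
    unfolding P_def using p by (subst sum.reindex) (simp_all, rule sum.cong, simp_all add: prod2 nxy)
  finally show ?thesis .
qed

lemma kel_mono: assumes G: "is_graph_on n E" and u: "\<forall>i. u i \<ge> 0" and xy: "u x \<ge> u y"
  shows "P (kelmans x y E) u \<ge> P E u"
proof -
  have "(\<Sum>z\<in>KD x y E. u y * u z) \<le> (\<Sum>z\<in>KD x y E. u x * u z)"
    by (rule sum_mono) (use u xy in \<open>auto intro: mult_right_mono\<close>)
  then show ?thesis using kel_P[OF G] by simp
qed



definition sw :: "nat \<Rightarrow> nat \<Rightarrow> nat \<Rightarrow> nat" where
  "sw x y i = (if i = x then y else if i = y then x else i)"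

lemma edge_sym: "{a,b} \<in> E \<longleftrightarrow> {b,a} \<in> E"
  by (simp add: insert_commute)

lemma swK: assumes G: "is_graph_on n E" and xy: "x \<noteq> y"
  shows "{sw x y a, sw x y b} \<in> kelmans x y E \<longleftrightarrow> {a,b} \<in> kelmans y x E"
proof -
  have ns: "\<And>a. {a,a} \<notin> E" using graph_nosing[OF G] by simp
  show ?thesis
  proof (cases "a = x")
    case True
    then show ?thesis
    proof (cases "b = x")
      case True then show ?thesis using \<open>a = x\<close> xy ns unfolding memK KD_mem sw_def by auto
    next
      case bx: False
      then show ?thesis
      proof (cases "b = y")
        case True then show ?thesis using \<open>a = x\<close> xy ns edge_sym[of x y E] unfolding memK KD_mem sw_def by auto
      next
        case False then show ?thesis using \<open>a = x\<close> bx xy ns edge_sym[of x b E] edge_sym[of y b E]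
          unfolding memK KD_mem sw_def by auto
      qed
    qed
  next
    case ax: False
    show ?thesis
    proof (cases "a = y")
      case True
      then show ?thesis
      proof (cases "b = x")
        case True then show ?thesis using \<open>a = y\<close> xy ns edge_sym[of x y E] unfolding memK KD_mem sw_def by auto
      next
        case bx: False
        then show ?thesis
        proof (cases "b = y")
          case True then show ?thesis using \<open>a = y\<close> xy ns unfolding memK KD_mem sw_def by auto
        next
          case False then show ?thesis using \<open>a = y\<close> bx xy ns edge_sym[of x b E] edge_sym[of y b E]
            unfolding memK KD_mem sw_def by auto
        qed
      qed
    next
      case ay: False
      show ?thesis
      proof (cases "b = x")
        case True then show ?thesis using ax ay xy ns edge_sym[of x a E] edge_sym[of y a E]
          unfolding memK KD_mem sw_def by auto
      next
        case bx: False
        then show ?thesis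
        proof (cases "b = y")
          case True then show ?thesis using ax ay bx xy ns edge_sym[of x a E] edge_sym[of y a E]
            unfolding memK KD_mem sw_def by auto
        next
          case False then show ?thesis using ax ay bx xy
            unfolding memK KD_mem sw_def by auto
        qed
      qed
    qed
  qed
qed


lemma sw_sw: "sw x y (sw x y i) = i" unfolding sw_def by auto

lemma sw_bij: assumes "x \<in> {1..n}" "y \<in> {1..n}"
  shows "bij_betw (sw x y) {1..n} {1..n}"
proof (rule bij_betw_byWitness[where f' = "sw x y"])
  show "\<forall>a\<in>{1..n}. sw x y (sw x y a) = a" by (simp add: sw_sw)
  show "\<forall>a\<in>{1..n}. sw x y (sw x y a) = a" by (simp add: sw_sw)
  show "sw x y ` {1..n} \<subseteq> {1..n}" using assms unfolding sw_def by auto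
  show "sw x y ` {1..n} \<subseteq> {1..n}" using assms unfolding sw_def by auto
qed

lemma sum_sw: assumes "x \<in> {1..n}" "y \<in> {1..n}"
  shows "(\<Sum>i\<in>{1..n}. g (sw x y i)) = (\<Sum>i\<in>{1..n}. g i)"
  using sum.reindex_bij_betw[OF sw_bij[OF assms]] .

lemma N2_sw: assumes "x \<in> {1..n}" "y \<in> {1..n}"
  shows "N2 n (\<lambda>i. u (sw x y i)) = N2 n u"
  unfolding N2_def using sum_sw[OF assms, of "\<lambda>i. (u i)^2"] .

lemma Q_sw: assumes G: "is_graph_on n E" and x: "x \<in> {1..n}" and y: "y \<in> {1..n}" and xy: "x \<noteq> y"
  shows "Q n (kelmans x y E) (\<lambda>i. u (sw x y i)) = Q n (kelmans y x E) u"
proof -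
  define h where "h a b = (if {sw x y a, sw x y b} \<in> kelmans x y E then u a * u b else 0)" for a b
  have "Q n (kelmans x y E) (\<lambda>i. u (sw x y i)) = (\<Sum>i\<in>{1..n}. \<Sum>j\<in>{1..n}. h (sw x y i) (sw x y j))"
    unfolding Q_def h_def sw_sw ..
  also have "\<dots> = (\<Sum>i\<in>{1..n}. \<Sum>j\<in>{1..n}. h (sw x y i) j)"
    by (rule sum.cong[OF refl], rule sum_sw[OF x y])
  also have "\<dots> = (\<Sum>i\<in>{1..n}. \<Sum>j\<in>{1..n}. h i j)"
    by (rule sum_sw[OF x y, of "\<lambda>i. \<Sum>j\<in>{1..n}. h i j"])
  also have "\<dots> = Q n (kelmans y x E) u"
    unfolding Q_def h_def swK[OF G xy] ..
  finally show ?thesis .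
qed

lemma step_transfer: assumes G: "is_graph_on n E" and xy: "1 \<le> x" "x < y" "y \<le> n"
  and u: "\<forall>i. u i \<ge> 0"
  shows "\<exists>u'. (\<forall>i. u' i \<ge> 0) \<and> N2 n u' = N2 n u \<and> Q n (kelmans x y E) u' \<ge> Q n E u"
proof (cases "u x \<ge> u y")
  case True
  have "P (kelmans x y E) u \<ge> P E u" by (rule kel_mono[OF G u True])
  moreover have GK: "is_graph_on n (kelmans x y E)" by (rule kel_graph[OF G]) (use xy in auto)
  ultimately have "Q n (kelmans x y E) u \<ge> Q n E u" using Q_P[OF G, of u] Q_P[OF GK, of u] by simp
  then show ?thesis using u by (intro exI[of _ u]) simp
next
  case False
  have x: "x \<in> {1..n}" and y: "y \<in> {1..n}" and ne: "x \<noteq> y" using xy by auto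
  have "P (kelmans y x E) u \<ge> P E u" by (rule kel_mono[OF G u]) (use False in auto)
  moreover have GK: "is_graph_on n (kelmans y x E)" by (rule kel_graph[OF G y])
  ultimately have "Q n (kelmans y x E) u \<ge> Q n E u" using Q_P[OF G, of u] Q_P[OF GK, of u] by simp
  then have "Q n (kelmans x y E) (\<lambda>i. u (sw x y i)) \<ge> Q n E u" using Q_sw[OF G x y ne] by simp
  moreover have "N2 n (\<lambda>i. u (sw x y i)) = N2 n u" by (rule N2_sw[OF x y])
  ultimately show ?thesis using u by (intro exI[of _ "\<lambda>i. u (sw x y i)"]) simp
qed

lemma transfer: assumes "(kelmans_step n)\<^sup>*\<^sup>* E F" and G: "is_graph_on n E"
  shows "is_graph_on n F \<and> card F = card E \<and>
    (\<forall>u. (\<forall>i. u i \<ge> 0) \<longrightarrow> (\<exists>u'. (\<forall>i. u' i \<ge> 0) \<and> N2 n u' = N2 n u \<and> Q n F u' \<ge> Q n E u))"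
  using assms(1)
proof (induction rule: rtranclp_induct)
  case base
  then show ?case using G by auto
next
  case (step F F')
  then obtain x y where xy: "1 \<le> x" "x < y" "y \<le> n" and F': "F' = kelmans x y F"
    unfolding kelmans_step_def by blast
  have GF: "is_graph_on n F" using step.IH by blast
  have "is_graph_on n F'" unfolding F' by (rule kel_graph[OF GF]) (use xy in auto)
  moreover have "card F' = card E" unfolding F' using kel_card[OF GF] step.IH by simp
  moreover have "\<forall>u. (\<forall>i. u i \<ge> 0) \<longrightarrow> (\<exists>u'. (\<forall>i. u' i \<ge> 0) \<and> N2 n u' = N2 n u \<and> Q n F' u' \<ge> Q n E u)"
  proof (intro allI impI)
    fix u :: "nat \<Rightarrow> real" assume u: "\<forall>i. u i \<ge> 0"
    then obtain u1 where u1: "\<forall>i. u1 i \<ge> 0" "N2 n u1 = N2 n u" "Q n F u1 \<ge> Q n E u"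
      using step.IH by blast
    from step_transfer[OF GF xy u1(1)] obtain u2 where
      "\<forall>i. u2 i \<ge> 0" "N2 n u2 = N2 n u1" "Q n F' u2 \<ge> Q n F u1" unfolding F' by blast
    then show "\<exists>u'. (\<forall>i. u' i \<ge> 0) \<and> N2 n u' = N2 n u \<and> Q n F' u' \<ge> Q n E u"
      using u1 by (intro exI[of _ u2]) auto
  qed
  ultimately show ?case by blast
qed



definition nb :: "nat \<Rightarrow> nat set set \<Rightarrow> nat \<Rightarrow> nat set" where
  "nb n H i = {k \<in> {1..n}. {i,k} \<in> H}"

lemma shift: assumes st: "kelmans_stable n H" and xy: "1 \<le> x" "x < y" "y \<le> n"
  and e: "{y,z} \<in> H" and zx: "z \<noteq> x"
  shows "{x,z} \<in> H"
proof (rule ccontr)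
  assume nx: "{x,z} \<notin> H"
  have K: "kelmans x y H = H" using st xy unfolding kelmans_stable_def by blast
  have "z \<in> KD x y H" unfolding KD_mem using e nx zx edge_sym[of z y H] edge_sym[of z x H] by simp
  then have "{y,z} \<notin> kelmans x y H" unfolding memK using xy zx by auto
  then show False using K e by simp
qed

lemma missing: assumes st: "kelmans_stable n H" and G: "is_graph_on n H"
  and m: "{a0,b0} \<notin> H" and ab0: "1 \<le> a0" "a0 < b0" "b0 \<le> n"
  and e: "{a,b} \<in> H" and ab: "a0 \<le> a" "b0 \<le> b"
  shows False
proof -
  have an: "a \<le> n" "b \<le> n" using graph_edge2[OF G e] by auto
  have 1: "{a0,b} \<in> H"
  proof (cases "a = a0")
    case True then show ?thesis using e by simp
  next
    case False
    have "{a,b} \<in> H" by (rule e)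
    from shift[OF st _ _ _ this] show ?thesis using False ab ab0 an by auto
  qed
  have 2: "{a0,b0} \<in> H"
  proof (cases "b = b0")
    case True then show ?thesis using 1 by simp
  next
    case False
    have "{b,a0} \<in> H" using 1 edge_sym by metis
    from shift[OF st _ _ _ this] have "{b0,a0} \<in> H" using False ab ab0 an by auto
    then show ?thesis using edge_sym by metis
  qed
  show False using 2 m by simp
qed

lemma nb_sub: assumes G: "is_graph_on n H" shows "nb n H i \<subseteq> {1..n} - {i}"
  unfolding nb_def using graph_edge2(1)[OF G] by auto

lemma nb_hi: assumes st: "kelmans_stable n H" and G: "is_graph_on n H"
  and m: "{a0,b0} \<notin> H" and ab0: "1 \<le> a0" "a0 < b0" "b0 \<le> n" and i: "b0 \<le> i"
  shows "nb n H i \<subseteq> {1..<a0}"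
proof
  fix k assume k: "k \<in> nb n H i"
  then have e: "{k,i} \<in> H" "k \<ge> 1" unfolding nb_def using edge_sym[of i k H] by auto
  show "k \<in> {1..<a0}"
  proof (rule ccontr)
    assume "k \<notin> {1..<a0}"
    then have "a0 \<le> k" using e by auto
    from missing[OF st G m ab0 e(1) this i] show False .
  qed
qed

lemma nb_mid: assumes st: "kelmans_stable n H" and G: "is_graph_on n H"
  and m: "{a0,b0} \<notin> H" and ab0: "1 \<le> a0" "a0 < b0" "b0 \<le> n" and i: "a0 \<le> i"
  shows "nb n H i \<subseteq> {1..<b0} - {i}"
proof
  fix k assume k: "k \<in> nb n H i"
  then have e: "{i,k} \<in> H" "k \<ge> 1" "k \<noteq> i" using nb_sub[OF G] unfolding nb_def by auto
  show "k \<in> {1..<b0} - {i}"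
  proof (rule ccontr)
    assume "k \<notin> {1..<b0} - {i}"
    then have "b0 \<le> k" using e by auto
    from missing[OF st G m ab0 e(1) i this] show False .
  qed
qed



lemma ind_sum: "finite A \<Longrightarrow> (\<Sum>j\<in>A. if R j then (1::real) else 0) = real (card {j\<in>A. R j})"
  by (simp add: sum.inter_filter[symmetric])

lemma Q_one: "Q n H (\<lambda>_. 1) = (\<Sum>i\<in>{1..n}. real (card (nb n H i)))"
  unfolding Q_def nb_def mult_1
  by (rule sum.cong[OF refl], rule ind_sum) simp

lemma deg_sum: assumes G: "is_graph_on n H"
  shows "(\<Sum>i\<in>{1..n}. card (nb n H i)) = 2 * card H"
proof -
  have "real (\<Sum>i\<in>{1..n}. card (nb n H i)) = Q n H (\<lambda>_. 1)" by (simp add: Q_one)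
  also have "\<dots> = 2 * P H (\<lambda>_. 1)" by (rule Q_P[OF G])
  also have "\<dots> = real (2 * card H)" unfolding P_def by simp
  finally show ?thesis by linarith
qed

lemma sum3: assumes "1 \<le> a0" "a0 \<le> b0" "b0 \<le> Suc n"
  shows "(\<Sum>i\<in>{1..n}. f i) = (\<Sum>i\<in>{1..<a0}. f i) + (\<Sum>i\<in>{a0..<b0}. f i) + (\<Sum>i\<in>{b0..<Suc n}. f i)"
proof -
  have "{1..n} = {1..<Suc n}" by auto
  moreover have "(\<Sum>i\<in>{1..<a0}. f i) + (\<Sum>i\<in>{a0..<b0}. f i) = (\<Sum>i\<in>{1..<b0}. f i)"
    using assms by (rule_tac sum.atLeastLessThan_concat) auto
  moreover have "(\<Sum>i\<in>{1..<b0}. f i) + (\<Sum>i\<in>{b0..<Suc n}. f i) = (\<Sum>i\<in>{1..<Suc n}. f i)"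
    using assms by (rule_tac sum.atLeastLessThan_concat) auto
  ultimately show ?thesis by simp
qed

lemma edge_bound: assumes st: "kelmans_stable n H" and G: "is_graph_on n H"
  and m: "{a0,b0} \<notin> H" and ab0: "1 \<le> a0" "a0 < b0" "b0 \<le> n"
  shows "2 * card H \<le> (a0-1)*(n-1) + (b0-a0)*(b0-2) + (Suc n-b0)*(a0-1)"
proof -
  define bnd where "bnd i = (if i < a0 then n - 1 else if i < b0 then b0 - 2 else a0 - 1)" for i
  have "\<forall>i\<in>{1..n}. card (nb n H i) \<le> bnd i"
  proof
    fix i assume i: "i \<in> {1..n}"
    show "card (nb n H i) \<le> bnd i"
    proof (cases "i < a0")
      case True
      have "card (nb n H i) \<le> card ({1..n} - {i})" by (rule card_mono) (use nb_sub[OF G] in auto)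
      then show ?thesis using True i unfolding bnd_def by simp
    next
      case F1: False
      show ?thesis
      proof (cases "i < b0")
        case True
        have "card (nb n H i) \<le> card ({1..<b0} - {i})"
          by (rule card_mono) (use nb_mid[OF st G m ab0] F1 in auto)
        then show ?thesis using True F1 i unfolding bnd_def by simp
      next
        case False
        have "card (nb n H i) \<le> card {1..<a0}"
          by (rule card_mono) (use nb_hi[OF st G m ab0] False in auto)
        then show ?thesis using False F1 i unfolding bnd_def by simp
      qed
    qed
  qed
  then have "(\<Sum>i\<in>{1..n}. card (nb n H i)) \<le> (\<Sum>i\<in>{1..n}. bnd i)" by (intro sum_mono) blast
  also have "\<dots> = (\<Sum>i\<in>{1..<a0}. bnd i) + (\<Sum>i\<in>{a0..<b0}. bnd i) + (\<Sum>i\<in>{b0..<Suc n}. bnd i)"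
    by (rule sum3) (use ab0 in auto)
  also have "(\<Sum>i\<in>{1..<a0}. bnd i) = (a0-1)*(n-1)"
    by (subst sum.cong[OF refl, of _ _ "\<lambda>_. n-1"]) (auto simp: bnd_def)
  also have "(\<Sum>i\<in>{a0..<b0}. bnd i) = (b0-a0)*(b0-2)"
    by (subst sum.cong[OF refl, of _ _ "\<lambda>_. b0-2"]) (auto simp: bnd_def)
  also have "(\<Sum>i\<in>{b0..<Suc n}. bnd i) = (Suc n-b0)*(a0-1)"
    by (subst sum.cong[OF refl, of _ _ "\<lambda>_. a0-1"]) (use ab0 in \<open>auto simp: bnd_def\<close>)
  finally show ?thesis using deg_sum[OF G] by simp
qed



lemma amgm_w: fixes a b s t :: real assumes "s > 0" "t > 0"
  shows "a * b \<le> ((t / s) * a^2 + (s / t) * b^2) / 2"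
proof -
  have "0 \<le> (t * a - s * b)^2" by simp
  then have "2 * (s * t) * (a * b) \<le> t^2 * a^2 + s^2 * b^2" by (simp add: power2_eq_square algebra_simps)
  then show ?thesis using assms by (simp add: field_simps power2_eq_square)
qed

lemma weighted: assumes G: "is_graph_on n H" and w: "\<forall>i\<in>{1..n}. w i > 0"
  and b: "\<forall>i\<in>{1..n}. (\<Sum>k\<in>{1..n}. if {i,k} \<in> H then w k else 0) \<le> c * w i"
  shows "Q n H u \<le> c * N2 n u"
proof -
  define a where "a i j = (if {i,j} \<in> H then (1::real) else 0)" for i j
  have asym: "a i j = a j i" for i j unfolding a_def using edge_sym[of i j H] by simp
  have a0: "a i j \<ge> 0" for i j unfolding a_def by simp
  define T1 where "T1 = (\<Sum>i\<in>{1..n}. \<Sum>j\<in>{1..n}. a i j * ((w j / w i) * (u i)^2))"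
  define T2 where "T2 = (\<Sum>i\<in>{1..n}. \<Sum>j\<in>{1..n}. a i j * ((w i / w j) * (u j)^2))"
  have "Q n H u = (\<Sum>i\<in>{1..n}. \<Sum>j\<in>{1..n}. a i j * (u i * u j))"
    unfolding Q_def a_def by (intro sum.cong refl) auto
  also have "\<dots> \<le> (\<Sum>i\<in>{1..n}. \<Sum>j\<in>{1..n}. a i j * (((w j / w i) * (u i)^2 + (w i / w j) * (u j)^2) / 2))"
    by (intro sum_mono mult_left_mono amgm_w a0) (use w in auto)
  also have "\<dots> = (\<Sum>i\<in>{1..n}. \<Sum>j\<in>{1..n}. (a i j * ((w j / w i) * (u i)^2) + a i j * ((w i / w j) * (u j)^2)) / 2)"
    by (intro sum.cong refl) (simp add: add_divide_distrib distrib_left)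
  also have "\<dots> = (T1 + T2) / 2"
    unfolding T1_def T2_def by (simp only: sum_divide_distrib[symmetric] sum.distrib)
  also have "T2 = T1"
  proof -
    have "T2 = (\<Sum>j\<in>{1..n}. \<Sum>i\<in>{1..n}. a i j * ((w i / w j) * (u j)^2))"
      unfolding T2_def by (rule sum.swap)
    also have "\<dots> = T1" unfolding T1_def using asym by simp
    finally show ?thesis .
  qed
  also have "(T1 + T1) / 2 = T1" by simp
  also have "T1 = (\<Sum>i\<in>{1..n}. ((u i)^2 / w i) * (\<Sum>k\<in>{1..n}. if {i,k} \<in> H then w k else 0))"
    unfolding T1_def a_def by (simp add: sum_distrib_left, intro sum.cong refl) auto
  also have "\<dots> \<le> (\<Sum>i\<in>{1..n}. ((u i)^2 / w i) * (c * w i))"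
    by (intro sum_mono mult_left_mono) (use b w in \<open>auto intro!: divide_nonneg_pos\<close>)
  also have "\<dots> = c * N2 n u" unfolding N2_def sum_distrib_left using w by (intro sum.cong refl) force+
  finally show ?thesis .
qed



lemma split3: fixes p q r :: real and S :: "nat set" assumes "finite S" "a0 \<le> b0"
  shows "(\<Sum>k\<in>S. (if k < a0 then p else if k < b0 then q else r)) =
    p * card (S \<inter> {..<a0}) + q * card (S \<inter> {a0..<b0}) + r * card (S \<inter> {b0..})"
proof -
  let ?w = "\<lambda>k. (if k < a0 then p else if k < b0 then q else r)"
  have eq: "S = (S \<inter> {..<a0}) \<union> ((S \<inter> {a0..<b0}) \<union> (S \<inter> {b0..}))" using assms by auto
  have "sum ?w S = sum ?w (S \<inter> {..<a0}) + (sum ?w (S \<inter> {a0..<b0}) + sum ?w (S \<inter> {b0..}))"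
    by (subst eq, subst sum.union_disjoint, use assms in auto, subst sum.union_disjoint, auto)
  also have "sum ?w (S \<inter> {..<a0}) = p * card (S \<inter> {..<a0})"
    by (subst sum.cong[OF refl, of _ _ "\<lambda>_. p"]) auto
  also have "sum ?w (S \<inter> {a0..<b0}) = q * card (S \<inter> {a0..<b0})"
    by (subst sum.cong[OF refl, of _ _ "\<lambda>_. q"]) auto
  also have "sum ?w (S \<inter> {b0..}) = r * card (S \<inter> {b0..})"
    by (subst sum.cong[OF refl, of _ _ "\<lambda>_. r"]) (use assms in auto)
  finally show ?thesis by simp
qed

lemma comb3: fixes p q r :: real assumes "p \<ge> 0" "q \<ge> 0" "r \<ge> 0"
  and "x1 \<le> A" "x2 \<le> B" "x3 \<le> C"
  shows "p * real x1 + q * real x2 + r * real x3 \<le> p * real A + q * real B + r * real C"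
proof -
  have "p * real x1 \<le> p * real A" using assms by (intro mult_left_mono) auto
  moreover have "q * real x2 \<le> q * real B" using assms by (intro mult_left_mono) auto
  moreover have "r * real x3 \<le> r * real C" using assms by (intro mult_left_mono) auto
  ultimately show ?thesis by linarith
qed

lemma region_bound: assumes st: "kelmans_stable n H" and G: "is_graph_on n H"
  and m: "{a0,b0} \<notin> H" and ab0: "1 \<le> a0" "a0 < b0" "b0 \<le> n"
  and pqr: "p > 0" "q > 0" "r > 0"
  and c1: "2 \<le> a0 \<longrightarrow> (real a0 - 2) * p + (real b0 - real a0) * q + (real n + 1 - real b0) * r \<le> (real n - 2) * p"
  and c2: "(real a0 - 1) * p + (real b0 - real a0 - 1) * q \<le> (real n - 2) * q"
  and c3: "(real a0 - 1) * p \<le> (real n - 2) * r"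
  shows "Q n H u \<le> (real n - 2) * N2 n u"
proof -
  define w where "w k = (if k < a0 then p else if k < b0 then q else r)" for k
  have wpos: "\<forall>i\<in>{1..n}. w i > 0" using pqr unfolding w_def by auto
  have "\<forall>i\<in>{1..n}. (\<Sum>k\<in>{1..n}. if {i,k} \<in> H then w k else 0) \<le> (real n - 2) * w i"
  proof
    fix i assume i: "i \<in> {1..n}"
    let ?S = "nb n H i"
    have finS: "finite ?S" unfolding nb_def by simp
    have "(\<Sum>k\<in>{1..n}. if {i,k} \<in> H then w k else 0) = sum w ?S"
      unfolding nb_def by (rule sum.inter_filter[symmetric]) simp
    also have "\<dots> = p * card (?S \<inter> {..<a0}) + q * card (?S \<inter> {a0..<b0}) + r * card (?S \<inter> {b0..})"
      unfolding w_def by (rule split3[OF finS]) (use ab0 in auto)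
    also have "\<dots> \<le> (real n - 2) * w i"
    proof (cases "i < a0")
      case True
      have sub: "?S \<subseteq> {1..n} - {i}" by (rule nb_sub[OF G])
      have "card (?S \<inter> {..<a0}) \<le> card ({1..<a0} - {i})" by (rule card_mono) (use sub in auto)
      also have "\<dots> = a0 - 2" using True i by simp
      finally have k1: "card (?S \<inter> {..<a0}) \<le> a0 - 2" .
      have k2: "card (?S \<inter> {a0..<b0}) \<le> b0 - a0"
        using card_mono[of "{a0..<b0}" "?S \<inter> {a0..<b0}"] by auto
      have "card (?S \<inter> {b0..}) \<le> card {b0..n}" by (rule card_mono) (use sub in auto)
      then have k3: "card (?S \<inter> {b0..}) \<le> Suc n - b0" by simp
      have "p * card (?S \<inter> {..<a0}) + q * card (?S \<inter> {a0..<b0}) + r * card (?S \<inter> {b0..})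
          \<le> p * real (a0 - 2) + q * real (b0 - a0) + r * real (Suc n - b0)"
        by (rule comb3[OF _ _ _ k1 k2 k3]) (use pqr in auto)
      also have "\<dots> = (real a0 - 2) * p + (real b0 - real a0) * q + (real n + 1 - real b0) * r"
        using True i ab0 by (simp add: of_nat_diff algebra_simps)
      also have "\<dots> \<le> (real n - 2) * p" using c1 True i by auto
      finally show ?thesis using True unfolding w_def by simp
    next
      case F1: False
      show ?thesis
      proof (cases "i < b0")
        case True
        have sub: "?S \<subseteq> {1..<b0} - {i}" by (rule nb_mid[OF st G m ab0]) (use F1 in auto)
        have "?S \<inter> {..<a0} \<subseteq> {1..<a0}" using sub by auto
        then have k1: "card (?S \<inter> {..<a0}) \<le> a0 - 1"
          using card_mono[of "{1..<a0}" "?S \<inter> {..<a0}"] by simp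
        have "card (?S \<inter> {a0..<b0}) \<le> card ({a0..<b0} - {i})" by (rule card_mono) (use sub in auto)
        then have k2: "card (?S \<inter> {a0..<b0}) \<le> b0 - a0 - 1" using True F1 by simp
        have k3: "card (?S \<inter> {b0..}) \<le> 0"
        proof -
          have "?S \<inter> {b0..} = {}" using sub by auto
          then show ?thesis by simp
        qed
        have "p * card (?S \<inter> {..<a0}) + q * card (?S \<inter> {a0..<b0}) + r * card (?S \<inter> {b0..})
          \<le> p * real (a0 - 1) + q * real (b0 - a0 - 1) + r * real 0"
          by (rule comb3[OF _ _ _ k1 k2 k3]) (use pqr in auto)
        also have "\<dots> = (real a0 - 1) * p + (real b0 - real a0 - 1) * q"
          using ab0 by (simp add: of_nat_diff algebra_simps)
        also have "\<dots> \<le> (real n - 2) * q" using c2 by simp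
        finally show ?thesis using True F1 unfolding w_def by simp
      next
        case False
        have sub: "?S \<subseteq> {1..<a0}" by (rule nb_hi[OF st G m ab0]) (use False in auto)
        have "?S \<inter> {..<a0} \<subseteq> {1..<a0}" using sub by auto
        then have k1: "card (?S \<inter> {..<a0}) \<le> a0 - 1"
          using card_mono[of "{1..<a0}" "?S \<inter> {..<a0}"] by simp
        have k2: "card (?S \<inter> {a0..<b0}) \<le> 0"
        proof -
          have "?S \<inter> {a0..<b0} = {}" using sub by auto
          then show ?thesis by simp
        qed
        have k3: "card (?S \<inter> {b0..}) \<le> 0"
        proof -
          have "?S \<inter> {b0..} = {}" using sub ab0 by auto
          then show ?thesis by simp
        qed
        have "p * card (?S \<inter> {..<a0}) + q * card (?S \<inter> {a0..<b0}) + r * card (?S \<inter> {b0..})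
          \<le> p * real (a0 - 1) + q * real 0 + r * real 0"
          by (rule comb3[OF _ _ _ k1 k2 k3]) (use pqr in auto)
        also have "\<dots> = (real a0 - 1) * p"
          using ab0 by (simp add: of_nat_diff algebra_simps)
        also have "\<dots> \<le> (real n - 2) * r" using c3 by simp
        finally show ?thesis using False F1 unfolding w_def by simp
      qed
    qed
    finally show "(\<Sum>k\<in>{1..n}. if {i,k} \<in> H then w k else 0) \<le> (real n - 2) * w i" .
  qed
  from weighted[OF G wpos this] show ?thesis .
qed



lemma choose2S: "2 * (Suc m choose 2) = Suc m * m"
proof -
  have "even (Suc m * m)" by simp
  then show ?thesis unfolding choose_two by simp
qed

lemma gen_false: assumes G: "is_graph_on n E" and rt: "(kelmans_step n)\<^sup>*\<^sup>* E H"
  and st: "kelmans_stable n H"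
  and m: "{a0,b0} \<notin> H" and ab0: "1 \<le> a0" "a0 < b0" "b0 \<le> n"
  and edge: "(int a0-1)*(int n-1) + (int b0 - int a0)*(int b0 - 2) + (int n + 1 - int b0)*(int a0-1) \<le> (int n-1)*(int n-2) + 2"
  and pqr: "p > 0" "q > 0" "r > 0"
  and c1: "2 \<le> a0 \<longrightarrow> (real a0 - 2) * p + (real b0 - real a0) * q + (real n + 1 - real b0) * r \<le> (real n - 2) * p"
  and c2: "(real a0 - 1) * p + (real b0 - real a0 - 1) * q \<le> (real n - 2) * q"
  and c3: "(real a0 - 1) * p \<le> (real n - 2) * r"
  and hyp: "card E > (n - 1 choose 2) + 1 \<or> (\<exists>u. (\<forall>i. u i \<ge> 0) \<and> Q n E u > (real n - 2) * N2 n u)"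
  shows False
proof -
  note T = transfer[OF rt G]
  have GH: "is_graph_on n H" using T by blast
  from hyp show False
  proof
    assume c: "card E > (n - 1 choose 2) + 1"
    have eb: "2 * card H \<le> (a0-1)*(n-1) + (b0-a0)*(b0-2) + (Suc n-b0)*(a0-1)"
      by (rule edge_bound[OF st GH m ab0])
    have "int (2 * card H) \<le> int ((a0-1)*(n-1) + (b0-a0)*(b0-2) + (Suc n-b0)*(a0-1))"
      using eb by linarith
    also have "\<dots> = (int a0-1)*(int n-1) + (int b0 - int a0)*(int b0 - 2) + (int n + 1 - int b0)*(int a0-1)"
      using ab0 by (simp add: of_nat_diff)
    also have "\<dots> \<le> (int n-1)*(int n-2) + 2" by (rule edge)
    also have "\<dots> = int ((n-1)*(n-2) + 2)" using ab0 by (simp add: of_nat_diff)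
    finally have "2 * card H \<le> (n-1)*(n-2) + 2" by linarith
    moreover have "2 * ((n - 1) choose 2) = (n-1)*(n-2)"
    proof -
      have "n - 1 = Suc (n - 2)" using ab0 by simp
      then show ?thesis using choose2S[of "n-2"] by (metis diff_Suc_1)
    qed
    moreover have "card H = card E" using T by blast
    ultimately show False using c by linarith
  next
    assume "\<exists>u. (\<forall>i. u i \<ge> 0) \<and> Q n E u > (real n - 2) * N2 n u"
    then obtain u where u: "\<forall>i. u i \<ge> 0" "Q n E u > (real n - 2) * N2 n u" by blast
    then obtain u' where u': "N2 n u' = N2 n u" "Q n H u' \<ge> Q n E u" using T by blast
    have "Q n H u' \<le> (real n - 2) * N2 n u'"
      by (rule region_bound[OF st GH m ab0 pqr c1 c2 c3])
    then have "Q n H u' \<le> (real n - 2) * N2 n u" using u'(1) by simp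
    then show False using u u' by linarith
  qed
qed

lemma arith_e: fixes J N :: int assumes "3 \<le> J" "2 * J \<le> N + 1"
  shows "(J-1)*(N-1) + (N+2-2*J)*(N-J) + (N + 1 - (N+2-J))*(J-1) \<le> (N-1)*(N-2) + 2"
proof -
  have h: "0 \<le> (J-2)*(2*N-3*J-1)" using assms by (intro mult_nonneg_nonneg) auto
  have "(N-1)*(N-2) + 2 - ((J-1)*(N-1) + (N+2-2*J)*(N-J) + (N + 1 - (N+2-J))*(J-1)) = (J-2)*(2*N-3*J-1)"
    by (simp add: algebra_simps)
  then show ?thesis using h by linarith
qed

lemma arith_e': fixes K N :: int assumes "1 \<le> K" "2 * K \<le> N"
  shows "(K-1)*(N-1) + (N+1-K - K)*(N+1-K - 2) + (N + 1 - (N+1-K))*(K-1) \<le> (N-1)*(N-2) + 2"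
proof -
  have h1: "0 \<le> (N-2*K)*(K-1)" using assms by (intro mult_nonneg_nonneg) auto
  have h2: "0 \<le> (2*K-3)^2" by simp
  have "4*((N-1)*(N-2) + 2 - ((K-1)*(N-1) + (N+1-K - K)*(N+1-K - 2) + (N + 1 - (N+1-K))*(K-1)))
     = 8*((N-2*K)*(K-1)) + (2*K-3)^2 + 7"
    by (simp add: algebra_simps power2_eq_square)
  then have "0 \<le> 4*((N-1)*(N-2) + 2 - ((K-1)*(N-1) + (N+1-K - K)*(N+1-K - 2) + (N + 1 - (N+1-K))*(K-1)))"
    using h1 h2 by linarith
  then show ?thesis by simp
qed



lemma arith_e2: fixes J N B :: int assumes "3 \<le> J" "2 * J \<le> N + 1" "B = N + 2 - J"
  shows "(J-1)*(N-1) + (B - J)*(B - 2) + (N + 1 - B)*(J-1) \<le> (N-1)*(N-2) + 2"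
proof -
  have "(B - J)*(B - 2) = (N+2-2*J)*(N-J)" unfolding assms(3) by (simp add: algebra_simps)
  then show ?thesis using arith_e[OF assms(1,2)] assms(3) by simp
qed

lemma arith_e2': fixes K N B :: int assumes "1 \<le> K" "2 * K \<le> N" "B = N + 1 - K"
  shows "(K-1)*(N-1) + (B - K)*(B - 2) + (N + 1 - B)*(K-1) \<le> (N-1)*(N-2) + 2"
  using arith_e'[OF assms(1,2)] assms(3) by simp

lemma main_lite:
  fixes n :: nat and E H :: "nat set set"
  assumes n4: "n \<ge> 4"
    and G: "is_graph_on n E"
    and hyp: "card E > (n - 1 choose 2) + 1 \<or> (\<exists>u. (\<forall>i. u i \<ge> 0) \<and> Q n E u > (real n - 2) * N2 n u)"
    and rt: "(kelmans_step n)\<^sup>*\<^sup>* E H"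
    and st: "kelmans_stable n H"
  shows "(\<forall>j \<in> {3..(n + 1) div 2}. {j, n + 2 - j} \<in> H) \<and>
         (\<forall>k \<in> {1..n div 2}. {k, n + 1 - k} \<in> H)"
proof (intro conjI ballI)
  fix j assume j: "j \<in> {3..(n + 1) div 2}"
  show "{j, n + 2 - j} \<in> H"
  proof (rule ccontr)
    assume m: "{j, n + 2 - j} \<notin> H"
    have j3: "3 \<le> j" and j2: "2 * j \<le> n + 1" using j by auto
    have ab0: "1 \<le> j" "j < n + 2 - j" "n + 2 - j \<le> n" using j3 j2 by auto
    have b0: "int (n + 2 - j) = int n + 2 - int j" "real (n + 2 - j) = real n + 2 - real j"
      using j2 by (auto simp: of_nat_diff)
    have edge: "(int j-1)*(int n-1) + (int (n + 2 - j) - int j)*(int (n + 2 - j) - 2) + (int n + 1 - int (n + 2 - j))*(int j-1) \<le> (int n-1)*(int n-2) + 2"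
      by (rule arith_e2) (use j3 j2 b0 in auto)
    show False
    proof (cases "2 * j \<le> n")
      case True
      show False
        by (rule gen_false[OF G rt st m ab0 edge, of 2 2 1]) (use hyp b0 True j3 in auto)
    next
      case False
      then have nj: "real n = 2 * real j - 1" using j2 by simp
      let ?p = "2 * real j - 3" and ?q = "real j - 1"
      have c1: "(real j - 2) * ?p + (real (n + 2 - j) - real j) * ?q + (real n + 1 - real (n + 2 - j)) * ?q \<le> (real n - 2) * ?p"
      proof -
        have "0 \<le> (real j - 1) * (real j - 3)" using j3 by (intro mult_nonneg_nonneg) auto
        moreover have "(real n - 2) * ?p - ((real j - 2) * ?p + (real (n + 2 - j) - real j) * ?q + (real n + 1 - real (n + 2 - j)) * ?q)
          = (real j - 1) * (real j - 3)" unfolding b0 nj by (simp add: algebra_simps)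
        ultimately show ?thesis by linarith
      qed
      have c2: "(real j - 1) * ?p + (real (n + 2 - j) - real j - 1) * ?q \<le> (real n - 2) * ?q"
        unfolding b0 nj by (simp add: algebra_simps)
      have c3: "(real j - 1) * ?p \<le> (real n - 2) * ?q"
        unfolding nj by (simp add: algebra_simps)
      show False
        by (rule gen_false[OF G rt st m ab0 edge, of ?p ?q ?q]) (use hyp c1 c2 c3 j3 in auto)
    qed
  qed
next
  fix k assume k: "k \<in> {1..n div 2}"
  show "{k, n + 1 - k} \<in> H"
  proof (rule ccontr)
    assume m: "{k, n + 1 - k} \<notin> H"
    have k1: "1 \<le> k" and k2: "2 * k \<le> n" using k by auto
    have ab0: "1 \<le> k" "k < n + 1 - k" "n + 1 - k \<le> n" using k1 k2 by auto
    have b0: "int (n + 1 - k) = int n + 1 - int k" "real (n + 1 - k) = real n + 1 - real k"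
      using k2 by (auto simp: of_nat_diff)
    have edge: "(int k-1)*(int n-1) + (int (n + 1 - k) - int k)*(int (n + 1 - k) - 2) + (int n + 1 - int (n + 1 - k))*(int k-1) \<le> (int n-1)*(int n-2) + 2"
      by (rule arith_e2') (use k1 k2 b0 in auto)
    show False
      by (rule gen_false[OF G rt st m ab0 edge, of 2 2 1]) (use hyp b0 k1 k2 in auto)
  qed
qed

lemma sum_shift1: "(\<Sum>m\<in>{1..n}. f m) = (\<Sum>i<n. f (Suc i))"
  by (induct n) auto

lemma rho_ext: assumes n: "n > 0" and rc: "rho n E > c" and c: "c \<ge> 0"
  shows "\<exists>u. (\<forall>i. u i \<ge> 0) \<and> Q n E u > c * N2 n u"
proof -
  define A where "A = adj_mat n E"
  have A: "A \<in> carrier_mat n n" unfolding A_def adj_mat_def by simp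
  from spectral_radius_mem_max(1)[OF A n] obtain lam where
    ev: "eigenvalue A lam" and nl: "norm lam = rho n E"
    unfolding rho_def A_def[symmetric] spectrum_def by auto
  from ev obtain v where v: "v \<in> carrier_vec n" "v \<noteq> 0\<^sub>v n" "A *\<^sub>v v = lam \<cdot>\<^sub>v v"
    unfolding eigenvalue_def eigenvector_def using A by auto
  define a where "a i j = (if {Suc i, Suc j} \<in> E then (1::real) else 0)" for i j
  define nu where "nu i = cmod (v $ i)" for i
  define u where "u m = nu (m - 1)" for m
  have nu0: "nu i \<ge> 0" for i unfolding nu_def by simp
  have key: "norm lam * nu i \<le> (\<Sum>j<n. a i j * nu j)" if i: "i < n" for i
  proof -
    have "lam * v $ i = (A *\<^sub>v v) $ i" using v(1,3) i by simp
    also have "\<dots> = (\<Sum>j\<in>{0..<n}. A $$ (i,j) * v $ j)"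
      using A v(1) i by (simp add: scalar_prod_def)
    also have "\<dots> = (\<Sum>j<n. of_real (a i j) * v $ j)"
      unfolding A_def adj_mat_def a_def using i by (intro sum.cong) auto
    finally have eq: "lam * v $ i = (\<Sum>j<n. of_real (a i j) * v $ j)" .
    have "norm lam * nu i = norm (lam * v $ i)" unfolding nu_def by (simp add: norm_mult)
    also have "\<dots> \<le> (\<Sum>j<n. norm (of_real (a i j) * v $ j))" unfolding eq by (rule norm_sum)
    also have "\<dots> = (\<Sum>j<n. a i j * nu j)"
      unfolding nu_def a_def by (intro sum.cong) (auto simp: norm_mult)
    finally show ?thesis .
  qed
  have "norm lam * (\<Sum>i<n. (nu i)^2) = (\<Sum>i<n. nu i * (norm lam * nu i))"
    by (simp add: sum_distrib_left power2_eq_square algebra_simps)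
  also have "\<dots> \<le> (\<Sum>i<n. nu i * (\<Sum>j<n. a i j * nu j))"
    by (intro sum_mono mult_left_mono key nu0) auto
  also have "\<dots> = Q n E u"
    unfolding Q_def sum_shift1 u_def a_def by (simp add: sum_distrib_left) (intro sum.cong refl, auto)
  finally have ineq: "norm lam * N2 n u \<le> Q n E u"
    unfolding N2_def sum_shift1 u_def by simp
  have pos: "N2 n u > 0"
  proof -
    obtain i where i: "i < n" "v $ i \<noteq> 0"
      using v(1,2) by (metis carrier_vecD eq_vecI index_zero_vec(1) index_zero_vec(2))
    have "(\<Sum>j<n. (nu j)^2) > 0"
    proof (rule sum_pos2[of _ i])
      show "(nu i)^2 > 0" using i unfolding nu_def by simp
    qed (use i in auto)
    then show ?thesis unfolding N2_def sum_shift1 u_def by simp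
  qed
  have "c * N2 n u < norm lam * N2 n u" using rc nl pos by simp
  then have "Q n E u > c * N2 n u" using ineq by linarith
  moreover have "\<forall>i. u i \<ge> 0" unfolding u_def using nu0 by simp
  ultimately show ?thesis by blast
qed


theorem mainTheorem7:
  fixes n :: nat and E H :: "nat set set"
  assumes "n \<ge> 4"
    and "is_graph_on n E"
    and "card E > (n - 1 choose 2) + 1 \<or> rho n E > real n - 2"
    and "(kelmans_step n)\<^sup>*\<^sup>* E H"
    and "kelmans_stable n H"
  shows "(\<forall>j \<in> {3..(n + 1) div 2}. {j, n + 2 - j} \<in> H) \<and>
         (\<forall>k \<in> {1..n div 2}. {k, n + 1 - k} \<in> H)"
proof (rule main_lite[OF assms(1,2) _ assms(4,5)])
  show "card E > (n - 1 choose 2) + 1 \<or> (\<exists>u. (\<forall>i. u i \<ge> 0) \<and> Q n E u > (real n - 2) * N2 n u)"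
  proof (cases "card E > (n - 1 choose 2) + 1")
    case True then show ?thesis by blast
  next
    case False
    then have "rho n E > real n - 2" using assms(3) by blast
    from rho_ext[OF _ this] assms(1) show ?thesis by auto
  qed
qed

end
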